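(* Let $0<\mu<L_{\max}^{-1}$ with $L_{\max}=\max_i\|A_i\|_2^2$, and let $\{x^n\}$ be generated by GAITA (as in the context) from any $x^0\in\mathbf{R}^N$. Then for all $n\in\mathbf{N}$, $$T_\lambda(x^n)-T_\lambda(x^{n+1})\geq\frac12\Big(\frac1\mu-L_{\max}\Big)\|x^n-x^{n+1}\|_2^2.$$
   Context: Let $A\in\mathbf{R}^{m\times N}$ have columns $A_1,\dots,A_N$, $y\in\mathbf{R}^m$, $\lambda>0$, $q\in(0,1)$, and $T_\lambda(x)=\frac12\|Ax-y\|_2^2+\lambda\sum_{i=1}^N|x_i|^q$. For a step size $\mu>0$ set $\tau_{\mu,q}=\frac{2-q}{2-2q}(2\lambda\mu(1-q))^{\frac{1}{2-q}}$ and $\eta_{\mu,q}=(2\lambda\mu(1-q))^{\frac{1}{2-q}}$. For $z\in\mathbf{R}$ let $prox_{\mu,\lambda|\cdot|^q}(z)=\arg\min_{v\in\mathbf{R}}\{\frac{(z-v)^2}{2\mu}+\lambda|v|^q\}$ (a single point when $|z|\neq\tau_{\mu,q}$). Define $\mathcal{T}(z,w)$ as the unique element of $prox_{\mu,\lambda|\cdot|^q}(z)$ if $|z|\neq\tau_{\mu,q}$, and, if $|z|=\tau_{\mu,q}$, as $sgn(z)\eta_{\mu,q}$ when $w\neq0$ and $0$ when $w=0$ ($sgn(0)=0$). GAITA: given $x^0\in\mathbf{R}^N$, for $n=0,1,2,\dots$ let $i=(n\bmod N)+1$, $z_i^n=x_i^n-\mu A_i^T(Ax^n-y)$, $x_i^{n+1}=\mathcal{T}(z_i^n,x_i^n)$,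 $x_j^{n+1}=x_j^n$ for $j\neq i$. *)

theory Defs
  imports "HOL-Analysis.Analysis"
begin

text \<open>Vectors in R^N are represented as functions nat => real, using coordinates 0..<N
  (0-based). The m x N matrix A is a function nat => nat => real, entries A r c with
  r < m, c < N; column c is (lambda r. A r c).\<close>

definition resid :: "nat \<Rightarrow> nat \<Rightarrow> (nat \<Rightarrow> nat \<Rightarrow> real) \<Rightarrow> (nat \<Rightarrow> real) \<Rightarrow> (nat \<Rightarrow> real) \<Rightarrow> nat \<Rightarrow> real"
  where "resid m N A y x r = (\<Sum>c<N. A r c * x c) - y r"

definition Tlam :: "nat \<Rightarrow> nat \<Rightarrow> (nat \<Rightarrow> nat \<Rightarrow> real) \<Rightarrow> (nat \<Rightarrow> real) \<Rightarrow> real \<Rightarrow> real \<Rightarrow> (nat \<Rightarrow> real) \<Rightarrow> real"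
  where "Tlam m N A y lam q x =
     (1/2) * (\<Sum>r<m. (resid m N A y x r)^2) + lam * (\<Sum>i<N. \<bar>x i\<bar> powr q)"

definition colnorm2 :: "nat \<Rightarrow> (nat \<Rightarrow> nat \<Rightarrow> real) \<Rightarrow> nat \<Rightarrow> real"
  where "colnorm2 m A i = (\<Sum>r<m. (A r i)^2)"

definition Lmax :: "nat \<Rightarrow> nat \<Rightarrow> (nat \<Rightarrow> nat \<Rightarrow> real) \<Rightarrow> real"
  where "Lmax m N A = Max ((\<lambda>i. colnorm2 m A i) ` {..<N})"

definition tau :: "real \<Rightarrow> real \<Rightarrow> real \<Rightarrow> real"
  where "tau lam mu q = (2 - q) / (2 - 2*q) * (2*lam*mu*(1-q)) powr (1/(2-q))"

definition eta :: "real \<Rightarrow> real \<Rightarrow> real \<Rightarrow> real"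
  where "eta lam mu q = (2*lam*mu*(1-q)) powr (1/(2-q))"

definition proxq :: "real \<Rightarrow> real \<Rightarrow> real \<Rightarrow> real \<Rightarrow> real set"
  where "proxq mu lam q z =
     {v. \<forall>u. (z-v)^2/(2*mu) + lam * \<bar>v\<bar> powr q \<le> (z-u)^2/(2*mu) + lam * \<bar>u\<bar> powr q}"

definition Tmap :: "real \<Rightarrow> real \<Rightarrow> real \<Rightarrow> real \<Rightarrow> real \<Rightarrow> real"
  where "Tmap mu lam q z w =
     (if \<bar>z\<bar> \<noteq> tau lam mu q then (THE v. v \<in> proxq mu lam q z)
      else if w \<noteq> 0 then sgn z * eta lam mu q else 0)"

definition is_gaita :: "nat \<Rightarrow> nat \<Rightarrow> (nat \<Rightarrow> nat \<Rightarrow> real) \<Rightarrow> (nat \<Rightarrow> real) \<Rightarrow> real \<Rightarrow> real \<Rightarrow> real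
    \<Rightarrow> (nat \<Rightarrow> nat \<Rightarrow> real) \<Rightarrow> bool"
  where "is_gaita m N A y lam q mu xs \<longleftrightarrow>
     (\<forall>n. let i = n mod N;
              z = xs n i - mu * (\<Sum>r<m. A r i * resid m N A y (xs n) r)
          in xs (Suc n) = (xs n)(i := Tmap mu lam q z (xs n i)))"

end

theory Submission
  imports Defs
begin

definition hq :: "real \<Rightarrow> real \<Rightarrow> real \<Rightarrow> real \<Rightarrow> real \<Rightarrow> real" where
  "hq mu lam q z v = (z-v)^2/(2*mu) + lam * \<bar>v\<bar> powr q"

lemma proxq_iff: "v \<in> proxq mu lam q z \<longleftrightarrow> (\<forall>u. hq mu lam q z v \<le> hq mu lam q z u)"
  by (simp add: proxq_def hq_def)

lemma hq_neg: "hq mu lam q (-z) (-v) = hq mu lam q z v"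
  by (simp add: hq_def power2_eq_square algebra_simps)

lemma proxq_neg: "-v \<in> proxq mu lam q (-z) \<longleftrightarrow> v \<in> proxq mu lam q z"
proof -
  have "(\<forall>u. hq mu lam q z v \<le> hq mu lam q z (-u)) \<longleftrightarrow> (\<forall>u. hq mu lam q z v \<le> hq mu lam q z u)"
    by (metis minus_minus)
  then show ?thesis unfolding proxq_iff by (metis hq_neg minus_minus)
qed

lemma eta_facts:
  assumes "0 < lam" "0 < q" "q < 1" "0 < mu"
  shows "eta lam mu q > 0" "eta lam mu q powr (2-q) = 2*lam*mu*(1-q)"
proof -
  let ?K = "2*lam*mu*(1-q)"
  have K: "?K > 0" using assms by simp
  show "eta lam mu q > 0" using K assms by (simp add: eta_def)
  show "eta lam mu q powr (2-q) = ?K" using K assms by (simp add: eta_def powr_powr)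
qed

lemma crit:
  assumes "0 < mu" "v > 0" "v \<in> proxq mu lam q z"
  shows "v - z + lam*mu*q * v powr (q-1) = 0"
proof -
  let ?f = "\<lambda>t. (z-t)^2/(2*mu) + lam * t powr q"
  have D: "DERIV ?f v :> (2*(z-v)*(-1)/(2*mu) + lam*(q * v powr (q-1)))"
    using assms(1,2) by (auto intro!: derivative_eq_intros has_real_derivative_powr simp: field_simps)
  have "\<forall>y. \<bar>v - y\<bar> < v \<longrightarrow> ?f v \<le> ?f y"
  proof (intro allI impI)
    fix y assume "\<bar>v - y\<bar> < v"
    then have "y > 0" by linarith
    then show "?f v \<le> ?f y" using assms(2,3) unfolding proxq_iff hq_def
      by (metis abs_of_pos)
  qed
  from DERIV_local_min[OF D assms(2) this]
  have "2*(z-v)*(-1)/(2*mu) + lam*(q * v powr (q-1)) = 0" .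
  moreover have "v - z + lam*mu*q * v powr (q-1) = mu * (2*(z-v)*(-1)/(2*mu) + lam*(q * v powr (q-1)))"
    using assms(1) by (simp add: field_simps)
  ultimately show ?thesis by simp
qed

lemma key_ineq:
  assumes "0 < mu" "0 < lam" "v > 0" "v \<in> proxq mu lam q z"
  shows "2*lam*mu*(1-q) * v powr (q-1) \<le> v"
    and "hq mu lam q z v = hq mu lam q z 0 \<Longrightarrow> 2*lam*mu*(1-q) * v powr (q-1) = v"
proof -
  define P where "P = v powr (q-1)"
  have zv: "z = v + lam*mu*q*P" using crit[OF assms(1,3,4)] P_def by simp
  have vq: "\<bar>v\<bar> powr q = v * P" using assms(3) unfolding P_def
    using powr_add[of v 1 "q-1"] by simp
  have h0: "hq mu lam q z 0 = z^2/(2*mu)" using assms by (simp add: hq_def)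
  have hv: "hq mu lam q z v = (z-v)^2/(2*mu) + lam * v * P" by (simp add: hq_def vq)
  have E: "2*mu*(hq mu lam q z v - hq mu lam q z 0) = v * (2*lam*mu*(1-q)*P - v)"
  proof -
    have "2*mu*(hq mu lam q z v - hq mu lam q z 0) = (z-v)^2 + 2*mu*lam * v * P - z^2"
      unfolding h0 hv using assms(1) by (simp add: field_simps)
    also have "\<dots> = v * (2*lam*mu*(1-q)*P - v)" unfolding zv
      by (simp add: field_simps power2_eq_square)
    finally show ?thesis .
  qed
  have "hq mu lam q z v \<le> hq mu lam q z 0" using assms(4) proxq_iff by blast
  then have "v * (2*lam*mu*(1-q)*P - v) \<le> 0" using E assms(1)
    by (metis diff_le_0_iff_le mult_nonneg_nonpos less_eq_real_def mult_pos_pos zero_less_numeral)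
  then show "2*lam*mu*(1-q) * v powr (q-1) \<le> v" using assms(3) unfolding P_def
    by (simp add: mult_le_0_iff)
  assume "hq mu lam q z v = hq mu lam q z 0"
  then have "v * (2*lam*mu*(1-q)*P - v) = 0" using E by simp
  then show "2*lam*mu*(1-q) * v powr (q-1) = v" using assms(3) unfolding P_def by simp
qed

lemma K_to_eta:
  assumes "0 < lam" "0 < q" "q < 1" "0 < mu" "v > 0"
  shows "2*lam*mu*(1-q) * v powr (q-1) \<le> v \<Longrightarrow> eta lam mu q \<le> v"
    and "2*lam*mu*(1-q) * v powr (q-1) = v \<Longrightarrow> eta lam mu q = v"
proof -
  let ?K = "2*lam*mu*(1-q)"
  have K: "?K > 0" using assms by simp
  have vp: "v powr (2-q) = v / v powr (q-1)"
    using assms(5) powr_diff[of v 1 "q-1"] by simp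
  have Pp: "v powr (q-1) > 0" using assms(5) by simp
  have bk: "(v powr (2-q)) powr (1/(2-q)) = v" using assms by (simp add: powr_powr)
  { assume "?K * v powr (q-1) \<le> v"
    then have "?K \<le> v powr (2-q)" using Pp vp by (simp add: pos_le_divide_eq)
    then have "?K powr (1/(2-q)) \<le> (v powr (2-q)) powr (1/(2-q))"
      using K assms by (intro powr_mono2) auto
    then show "eta lam mu q \<le> v" using bk by (simp add: eta_def) }
  { assume "?K * v powr (q-1) = v"
    moreover have "v powr (q-1) * v powr (2-q) = v" using vp Pp by simp
    ultimately have "v powr (q-1) * ?K = v powr (q-1) * v powr (2-q)" by (simp add: mult.commute)
    then have "?K = v powr (2-q)" using Pp by simp
    then show "eta lam mu q = v" using bk by (simp add: eta_def) }
qed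

lemma phi_mono:
  assumes "0 < lam" "0 < q" "q < 1" "0 < mu" "eta lam mu q \<le> a" "a < b"
  shows "a + lam*mu*q * a powr (q-1) < b + lam*mu*q * b powr (q-1)"
proof -
  let ?e = "eta lam mu q"
  have e: "?e > 0" "?e powr (2-q) = 2*lam*mu*(1-q)" using eta_facts[OF assms(1-4)] by auto
  have em: "?e powr (q-2) = 1 / (2*lam*mu*(1-q))"
  proof -
    have "?e powr (q-2) = ?e powr (-(2-q))" by (simp only: minus_diff_eq)
    also have "\<dots> = inverse (?e powr (2-q))" by (rule powr_minus)
    finally show ?thesis by (simp only: e(2) inverse_eq_divide)
  qed
  show ?thesis
  proof (rule DERIV_pos_imp_increasing[OF assms(6)])
    fix x assume x: "a \<le> x" "x \<le> b"
    then have xp: "x > 0" using e assms(5) by linarith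
    have q2: "q-1-1 = q-2" by simp
    have D: "DERIV (\<lambda>x. x + lam*mu*q * x powr (q-1)) x :> 1 + lam*mu*q*((q-1) * x powr (q-2))"
      using DERIV_add[OF DERIV_ident DERIV_cmult[OF has_real_derivative_powr[OF xp, of "q-1"]]]
      unfolding q2 .
    have "x powr (q-2) \<le> ?e powr (q-2)"
      by (rule powr_mono2') (use e x assms in auto)
    then have "lam*mu*q*(1-q) * x powr (q-2) \<le> lam*mu*q*(1-q) * (1 / (2*lam*mu*(1-q)))"
      using assms em by (intro mult_left_mono) auto
    also have "\<dots> = q/2" using assms by (simp add: field_simps)
    finally have "lam*mu*q*(1-q) * x powr (q-2) \<le> q/2" .
    moreover have "1 + lam*mu*q*((q-1) * x powr (q-2)) = 1 - lam*mu*q*(1-q) * x powr (q-2)"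
      by (simp only: algebra_simps)
    ultimately have "1 + lam*mu*q*((q-1) * x powr (q-2)) > 0" using assms by linarith
    then show "\<exists>y. DERIV (\<lambda>x. x + lam*mu*q * x powr (q-1)) x :> y \<and> y > 0" using D by blast
  qed
qed

lemma prox_exists:
  assumes "0 < mu" "0 < lam" "0 < q"
  shows "\<exists>v. v \<in> proxq mu lam q z"
proof -
  let ?S = "cball (0::real) (2*\<bar>z\<bar>)"
  have c1: "continuous_on ?S (\<lambda>v. \<bar>v\<bar> powr q)"
    by (rule continuous_on_powr') (use assms in \<open>auto intro!: continuous_intros\<close>)
  have "continuous_on ?S (hq mu lam q z)" unfolding hq_def
    by (intro continuous_intros c1) (use assms in auto)
  then obtain v where v: "v \<in> ?S" "\<forall>y\<in>?S. hq mu lam q z v \<le> hq mu lam q z y"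
    using continuous_attains_inf[of ?S "hq mu lam q z"] by auto
  have "hq mu lam q z v \<le> hq mu lam q z u" for u
  proof (cases "u \<in> ?S")
    case True then show ?thesis using v by blast
  next
    case False
    then have u: "\<bar>u\<bar> > 2*\<bar>z\<bar>" by (simp add: dist_real_def)
    have "z^2 \<le> (z-u)^2"
    proof -
      have "(z-u)^2 - z^2 = u*(u - 2*z)" by (simp add: power2_eq_square algebra_simps)
      moreover have "u*(u - 2*z) \<ge> 0" using u
        by (cases "u \<ge> 0") (auto simp: abs_if mult_nonneg_nonneg split: if_splits intro: mult_nonpos_nonpos)
      ultimately show ?thesis by linarith
    qed
    then have "z^2/(2*mu) \<le> (z-u)^2/(2*mu)" using assms by (simp add: divide_right_mono)
    moreover have "lam * \<bar>u\<bar> powr q \<ge> 0" using assms by simp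
    ultimately have "hq mu lam q z 0 \<le> hq mu lam q z u" by (simp add: hq_def)
    moreover have "hq mu lam q z v \<le> hq mu lam q z 0" using v by simp
    ultimately show ?thesis by linarith
  qed
  then show ?thesis unfolding proxq_iff by blast
qed

lemma prox_nonneg:
  assumes "0 < mu" "0 < z" "v \<in> proxq mu lam q z"
  shows "v \<ge> 0"
proof (rule ccontr)
  assume "\<not> v \<ge> 0"
  then have v: "v < 0" by simp
  have "(z-(-v))^2 < (z-v)^2"
  proof -
    have "(z-v)^2 - (z-(-v))^2 = -4*z * v" by (simp add: power2_eq_square algebra_simps)
    moreover have "z * v < 0" using v assms(2) by (simp add: mult_pos_neg)
    ultimately show ?thesis by linarith
  qed
  then have "hq mu lam q z (-v) < hq mu lam q z v" using assms(1)
    by (simp add: hq_def divide_strict_right_mono)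
  moreover have "hq mu lam q z v \<le> hq mu lam q z (-v)" using assms(3) proxq_iff by blast
  ultimately show False by linarith
qed

lemma E_ident:
  assumes "0 < mu" "v > 0" "z = v + lam*mu*q * v powr (q-1)"
  shows "2*mu*(hq mu lam q z v - hq mu lam q z 0) = v * (2*lam*mu*(1-q) * v powr (q-1) - v)"
proof -
  define P where "P = v powr (q-1)"
  have zv: "z = v + lam*mu*q*P" using assms(3) P_def by simp
  have vq: "\<bar>v\<bar> powr q = v * P" using assms(2) unfolding P_def
    using powr_add[of v 1 "q-1"] by simp
  have h0: "hq mu lam q z 0 = z^2/(2*mu)" using assms by (simp add: hq_def)
  have hv: "hq mu lam q z v = (z-v)^2/(2*mu) + lam * v * P" by (simp add: hq_def vq)
  have "2*mu*(hq mu lam q z v - hq mu lam q z 0) = (z-v)^2 + 2*mu*lam * v * P - z^2"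
    unfolding h0 hv using assms(1) by (simp add: field_simps)
  also have "\<dots> = v * (2*lam*mu*(1-q)*P - v)" unfolding zv
    by (simp add: field_simps power2_eq_square)
  finally show ?thesis unfolding P_def .
qed

lemma eta_pow:
  assumes "0 < lam" "0 < q" "q < 1" "0 < mu"
  shows "2*lam*mu*(1-q) * eta lam mu q powr (q-1) = eta lam mu q"
proof -
  let ?e = "eta lam mu q"
  have e: "?e > 0" "?e powr (2-q) = 2*lam*mu*(1-q)" using eta_facts[OF assms] by auto
  have "?e powr (2-q) * ?e powr (q-1) = ?e powr ((2-q) + (q-1))" by (simp only: powr_add)
  also have "(2-q) + (q-1) = (1::real)" by simp
  finally show ?thesis using e by simp
qed

lemma phi_eta:
  assumes "0 < lam" "0 < q" "q < 1" "0 < mu"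
  shows "eta lam mu q + lam*mu*q * eta lam mu q powr (q-1) = tau lam mu q"
proof -
  let ?e = "eta lam mu q"
  let ?K = "2*lam*mu*(1-q)"
  have K: "?K > 0" using assms by simp
  have P: "?e powr (q-1) = ?e / ?K"
  proof -
    define K where "K = ?K"
    have "K * ?e powr (q-1) = ?e" "K > 0" using eta_pow[OF assms] K K_def by auto
    then have "?e powr (q-1) = ?e / K" by (simp add: eq_divide_eq mult.commute)
    then show ?thesis by (simp add: K_def)
  qed
  have "tau lam mu q = (2-q)/(2-2*q) * ?e" by (simp add: tau_def eta_def)
  moreover have "?e + lam*mu*q * (?e / ?K) = (2-q)/(2-2*q) * ?e"
    using assms by (simp add: field_simps)
  ultimately show ?thesis using P by simp
qed

lemma tau_pos:
  assumes "0 < lam" "0 < q" "q < 1" "0 < mu"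
  shows "tau lam mu q > 0"
  using eta_facts(1)[OF assms] assms by (simp add: tau_def eta_def)

lemma pos_min:
  assumes "0 < lam" "0 < q" "q < 1" "0 < mu" "v > 0" "v \<in> proxq mu lam q z"
  shows "eta lam mu q \<le> v" "z = v + lam*mu*q * v powr (q-1)"
proof -
  show "eta lam mu q \<le> v" using K_to_eta(1)[OF assms(1-5)] key_ineq(1)[OF assms(4,1,5,6)] .
  show "z = v + lam*mu*q * v powr (q-1)" using crit[OF assms(4,5,6)] by simp
qed

lemma phi_inj:
  assumes "0 < lam" "0 < q" "q < 1" "0 < mu" "eta lam mu q \<le> a" "eta lam mu q \<le> b"
    and "a + lam*mu*q * a powr (q-1) = b + lam*mu*q * b powr (q-1)"
  shows "a = b"
proof (rule ccontr)
  assume "a \<noteq> b"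
  then have "a < b \<or> b < a" by linarith
  then show False using phi_mono[OF assms(1-4) assms(5)] phi_mono[OF assms(1-4) assms(6)] assms(7)
    by force
qed

lemma uniq_pos:
  assumes "0 < lam" "0 < q" "q < 1" "0 < mu" "0 < z" "z \<noteq> tau lam mu q"
    and "v \<in> proxq mu lam q z" "w \<in> proxq mu lam q z"
  shows "v = w"
proof -
  have v0: "v \<ge> 0" and w0: "w \<ge> 0" using prox_nonneg assms by blast+
  have eqv: "hq mu lam q z v = hq mu lam q z w" using assms(7,8) unfolding proxq_iff
    by (meson order_antisym)
  have zero_pos: False if "x > 0" "x \<in> proxq mu lam q z" "0 \<in> proxq mu lam q z" for x
  proof -
    have "hq mu lam q z x = hq mu lam q z 0" using that(2,3) unfolding proxq_iff
      by (meson order_antisym)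
    then have "2*lam*mu*(1-q) * x powr (q-1) = x" using key_ineq(2)[OF assms(4,1) that(1,2)] by blast
    then have "eta lam mu q = x" using K_to_eta(2)[OF assms(1-4) that(1)] by blast
    moreover have "z = x + lam*mu*q * x powr (q-1)" using pos_min(2)[OF assms(1-4) that(1,2)] .
    ultimately have "z = tau lam mu q" using phi_eta[OF assms(1-4)] by metis
    then show False using assms(6) by simp
  qed
  show ?thesis
  proof (cases "v = 0")
    case True
    show ?thesis
    proof (cases "w = 0")
      case True then show ?thesis using \<open>v = 0\<close> by simp
    next
      case False
      then have "w > 0" using w0 by simp
      then show ?thesis using zero_pos[of w] assms(7,8) \<open>v = 0\<close> by blast
    qed
  next
    case False
    then have vp: "v > 0" using v0 by simp
    show ?thesis
    proof (cases "w = 0")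
      case True then show ?thesis using zero_pos[of v] vp assms(7,8) by blast
    next
      case False
      then have wp: "w > 0" using w0 by simp
      have a: "eta lam mu q \<le> v" "z = v + lam*mu*q * v powr (q-1)"
        using pos_min[OF assms(1-4) vp assms(7)] by auto
      have b: "eta lam mu q \<le> w" "z = w + lam*mu*q * w powr (q-1)"
        using pos_min[OF assms(1-4) wp assms(8)] by auto
      have "v + lam*mu*q * v powr (q-1) = w + lam*mu*q * w powr (q-1)" using a(2) b(2) by linarith
      then show ?thesis using phi_inj[OF assms(1-4) a(1) b(1)] by blast
    qed
  qed
qed

lemma uniq_all:
  assumes "0 < lam" "0 < q" "q < 1" "0 < mu" "\<bar>z\<bar> \<noteq> tau lam mu q"
    and "v \<in> proxq mu lam q z" "w \<in> proxq mu lam q z"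
  shows "v = w"
proof -
  have zero_only: "x = 0" if "x \<in> proxq mu lam q 0" for x
  proof (rule ccontr)
    assume "x \<noteq> 0"
    then have "x^2/(2*mu) > 0" using assms(4) by simp
    moreover have "lam * \<bar>x\<bar> powr q \<ge> 0" using assms by simp
    ultimately have "hq mu lam q 0 0 < hq mu lam q 0 x" by (simp add: hq_def)
    then show False using that proxq_iff by (metis not_le)
  qed
  consider "z > 0" | "z = 0" | "z < 0" by linarith
  then show ?thesis
  proof cases
    case 1 then show ?thesis using uniq_pos[OF assms(1-4) 1 _ assms(6,7)] assms(5) by auto
  next
    case 2 then show ?thesis using zero_only assms(6,7) by blast
  next
    case 3
    have "-v \<in> proxq mu lam q (-z)" "-w \<in> proxq mu lam q (-z)" using proxq_neg assms by auto
    moreover have "-z > 0" "-z \<noteq> tau lam mu q" using 3 assms(5) by auto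
    ultimately have "-v = -w" using uniq_pos[OF assms(1-4), of "-z"] by blast
    then show ?thesis by simp
  qed
qed

lemma tau_in:
  assumes "0 < lam" "0 < q" "q < 1" "0 < mu"
  shows "eta lam mu q \<in> proxq mu lam q (tau lam mu q)"
proof -
  let ?z = "tau lam mu q" and ?e = "eta lam mu q"
  have zp: "?z > 0" using tau_pos[OF assms] .
  obtain m where m: "m \<in> proxq mu lam q ?z" using prox_exists assms by blast
  have m0: "m \<ge> 0" using prox_nonneg[OF assms(4) zp m] .
  show ?thesis
  proof (cases "m = 0")
    case True
    have e: "?e > 0" using eta_facts[OF assms] by auto
    have "2*mu*(hq mu lam q ?z ?e - hq mu lam q ?z 0) = ?e * (2*lam*mu*(1-q) * ?e powr (q-1) - ?e)"
      using E_ident[OF assms(4) e phi_eta[OF assms, symmetric]] .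
    then have "2*mu*(hq mu lam q ?z ?e - hq mu lam q ?z 0) = ?e * (?e - ?e)"
      unfolding eta_pow[OF assms] .
    then have "2*mu*(hq mu lam q ?z ?e - hq mu lam q ?z 0) = 0" by (simp only: diff_self mult_zero_right)
    then have "hq mu lam q ?z ?e = hq mu lam q ?z 0" using assms(4) by simp
    then show ?thesis using m True unfolding proxq_iff by simp
  next
    case False
    then have mp: "m > 0" using m0 by simp
    have a: "?e \<le> m" "?z = m + lam*mu*q * m powr (q-1)" using pos_min[OF assms mp m] by auto
    have "m + lam*mu*q * m powr (q-1) = ?e + lam*mu*q * ?e powr (q-1)"
      using a(2) phi_eta[OF assms] by linarith
    then have "m = ?e" using phi_inj[OF assms a(1) order_refl] by blast
    then show ?thesis using m by simp
  qed
qed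

lemma Tmap_ok:
  assumes "0 < lam" "0 < q" "q < 1" "0 < mu"
  shows "hq mu lam q z (Tmap mu lam q z w) \<le> hq mu lam q z w"
proof (cases "\<bar>z\<bar> \<noteq> tau lam mu q")
  case True
  obtain v where v: "v \<in> proxq mu lam q z" using prox_exists assms by blast
  have "\<exists>!v. v \<in> proxq mu lam q z" using v uniq_all[OF assms True] by blast
  then have "(THE v. v \<in> proxq mu lam q z) \<in> proxq mu lam q z" by (rule theI')
  then show ?thesis using True unfolding Tmap_def proxq_iff by simp
next
  case False
  then have za: "\<bar>z\<bar> = tau lam mu q" by simp
  show ?thesis
  proof (cases "w = 0")
    case True then show ?thesis using za by (simp add: Tmap_def)
  next
    case wne: False
    have "sgn z * eta lam mu q \<in> proxq mu lam q z"
    proof (cases "z > 0")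
      case True then show ?thesis using za tau_in[OF assms] by simp
    next
      case False
      then have "z = - tau lam mu q" using za tau_pos[OF assms] by (auto simp: abs_if split: if_splits)
      moreover have "z \<noteq> 0" using za tau_pos[OF assms] by auto
      moreover have "- eta lam mu q \<in> proxq mu lam q (- tau lam mu q)"
        using tau_in[OF assms] proxq_neg[of "eta lam mu q" mu lam q "tau lam mu q"] by blast
      moreover have "sgn z = -1" using False \<open>z \<noteq> 0\<close> by (simp add: sgn_if)
      ultimately show ?thesis by simp
    qed
    then show ?thesis using za wne unfolding Tmap_def proxq_iff by simp
  qed
qed

theorem mainTheorem8:
  fixes m N :: nat and A :: "nat \<Rightarrow> nat \<Rightarrow> real" and y :: "nat \<Rightarrow> real"
    and lam q mu :: real and xs :: "nat \<Rightarrow> nat \<Rightarrow> real"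
  assumes "0 < N" and "0 < lam" and "0 < q" and "q < 1"
    and "0 < mu" and "mu * Lmax m N A < 1"
    and "is_gaita m N A y lam q mu xs"
  shows "Tlam m N A y lam q (xs n) - Tlam m N A y lam q (xs (Suc n))
           \<ge> (1/2) * (1/mu - Lmax m N A) * (\<Sum>i<N. (xs n i - xs (Suc n) i)^2)"
proof -
  define i where "i = n mod N"
  define x where "x = xs n"
  define g where "g = (\<Sum>r<m. A r i * resid m N A y x r)"
  define z where "z = x i - mu * g"
  define v where "v = Tmap mu lam q z (x i)"
  define d where "d = v - x i"
  define c where "c = colnorm2 m A i"
  define L where "L = Lmax m N A"
  have iN: "i < N" using assms(1) by (simp add: i_def)
  have x': "xs (Suc n) = x(i := v)"
    using assms(7) unfolding is_gaita_def Let_def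
    by (simp add: i_def x_def g_def z_def v_def)
  have upd: "(x(i:=v)) j = x j + (if j = i then d else 0)" for j by (simp add: d_def)
  have res: "resid m N A y (x(i:=v)) r = resid m N A y x r + A r i * d" for r
  proof -
    have "(\<Sum>c<N. A r c * (x(i:=v)) c) = (\<Sum>c<N. A r c * x c + (if c = i then A r c * d else 0))"
      by (rule sum.cong) (auto simp: d_def algebra_simps)
    also have "\<dots> = (\<Sum>c<N. A r c * x c) + A r i * d"
      using iN by (simp add: sum.distrib d_def)
    finally show ?thesis by (simp add: resid_def)
  qed
  have sq: "(\<Sum>r<m. (resid m N A y (x(i:=v)) r)^2) = (\<Sum>r<m. (resid m N A y x r)^2) + 2*d*g + d^2*c"
  proof -
    have "(\<Sum>r<m. (resid m N A y (x(i:=v)) r)^2)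
        = (\<Sum>r<m. (resid m N A y x r)^2 + 2*d*(A r i * resid m N A y x r) + d^2*(A r i)^2)"
      by (rule sum.cong) (auto simp: res power2_eq_square algebra_simps)
    also have "\<dots> = (\<Sum>r<m. (resid m N A y x r)^2) + 2*d*g + d^2*c"
      by (simp add: sum.distrib sum_distrib_left g_def c_def colnorm2_def)
    finally show ?thesis .
  qed
  have pw: "(\<Sum>j<N. \<bar>(x(i:=v)) j\<bar> powr q) = (\<Sum>j<N. \<bar>x j\<bar> powr q) + (\<bar>v\<bar> powr q - \<bar>x i\<bar> powr q)"
  proof -
    have "(\<Sum>j<N. \<bar>(x(i:=v)) j\<bar> powr q) = (\<Sum>j<N. \<bar>x j\<bar> powr q + (if j = i then \<bar>v\<bar> powr q - \<bar>x i\<bar> powr q else 0))"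
      by (rule sum.cong) auto
    also have "\<dots> = (\<Sum>j<N. \<bar>x j\<bar> powr q) + (\<bar>v\<bar> powr q - \<bar>x i\<bar> powr q)"
      using iN by (simp add: sum.distrib)
    finally show ?thesis .
  qed
  have dd: "(\<Sum>j<N. (x j - (x(i:=v)) j)^2) = d^2"
  proof -
    have "(\<Sum>j<N. (x j - (x(i:=v)) j)^2) = (\<Sum>j<N. (if j = i then d^2 else 0))"
      by (rule sum.cong) (auto simp: d_def power2_eq_square algebra_simps)
    also have "\<dots> = d^2" using iN by simp
    finally show ?thesis .
  qed
  have cL: "c \<le> L" unfolding c_def L_def Lmax_def
    by (rule Max_ge) (use iN in auto)
  have T: "Tlam m N A y lam q x - Tlam m N A y lam q (x(i:=v))
      = -(1/2)*(2*d*g + d^2*c) + lam * (\<bar>x i\<bar> powr q - \<bar>v\<bar> powr q)"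
    unfolding Tlam_def sq pw by (simp add: algebra_simps)
  have ok: "hq mu lam q z v \<le> hq mu lam q z (x i)"
    unfolding v_def by (rule Tmap_ok) (use assms in auto)
  have "(z-v)^2/(2*mu) - (z - x i)^2/(2*mu) = d^2/(2*mu) + d*g"
    using assms(5) by (simp add: z_def d_def field_simps power2_eq_square)
  then have P: "d^2/(2*mu) + d*g \<le> lam * (\<bar>x i\<bar> powr q - \<bar>v\<bar> powr q)"
    using ok unfolding hq_def by (simp add: algebra_simps)
  have "d^2*c \<le> d^2*L" using cL by (simp add: mult_left_mono)
  moreover have "-(1/2)*(2*d*g + d^2*c) = -(d*g) - d^2*c/2" by (simp add: algebra_simps)
  moreover have "(1/2) * (1/mu - L) * d^2 = d^2/(2*mu) - d^2*L/2" by (simp add: field_simps)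
  ultimately have "(1/2) * (1/mu - L) * d^2 \<le> -(1/2)*(2*d*g + d^2*c) + lam * (\<bar>x i\<bar> powr q - \<bar>v\<bar> powr q)"
    using P \<open>-(1/2)*(2*d*g + d^2*c) = -(d*g) - d^2*c/2\<close> by linarith
  then show ?thesis using T dd x' by (simp add: x_def L_def)
qed

end
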